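(* Let $V$ be a vector space over a field $\mathbb{K}$ of characteristic $0$, let $F$ be a bilinear form on $V$, and set $a_F=a_1^F$. Then $\lambda_F=\exp(a_F)=\sum_{n\ge0}\frac{1}{n!}a_F^n$, where the series is finite when applied to any element of $\mathcal{T}(V)$.
   Context: $\mathcal{T}(V)$ is the tensor algebra of $V$. $a_1^F$ is the linear map on $\mathcal{T}(V)$ with $a_1^F(x_1\otimes\cdots\otimes x_p)=0$ for $p<2$ and $a_1^F(x_1\otimes\cdots\otimes x_p)=\sum_{1\le i<j\le p}(-1)^{i+j-1}F(x_i,x_j)\,x_1\otimes\cdots\widehat{x_i}\cdots\widehat{x_j}\cdots\otimes x_p$ for $p\ge2$. For $f\in V^*$, $i_f$ is the unique linear map on $\mathcal{T}(V)$ with $i_f(1)=0$ and $i_f(x\otimes u)=f(x)u-x\otimes i_f(u)$ ($x\in V$); $i_x^F:=i_{f_x}$ with $f_x(y)=F(x,y)$. $\Lambda_F:\mathcal{T}(V)\to\mathrm{End}(\mathcal{T}(V))$ is the unique unital algebra homomorphism with $\Lambda_F(x)(u)=x\otimes u+i_x^F(u)$ for $x\in V$, and $\lambda_F(u):=\Lambda_F(u)(1)$. *)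

theory Defs
  imports Complex_Main "HOL.Vector_Spaces" "HOL-Library.Function_Algebras"
begin

text \<open>The tensor algebra T(V) is realised as the free K-module on words
  ('v list \<Rightarrow> 'k, finitely supported) modulo the subspace tensor_rel generated by
  the multilinearity relations. Equality in T(V) is membership of the difference in
  tensor_rel.\<close>

definition tsupp :: "('v list \<Rightarrow> 'k::zero) \<Rightarrow> 'v list set" where
  "tsupp u = {w. u w \<noteq> 0}"

definition tsingle :: "'v list \<Rightarrow> 'v list \<Rightarrow> 'k::zero_neq_one" where
  "tsingle w = (\<lambda>w'. if w' = w then 1 else 0)"

definition tsmul :: "'k::times \<Rightarrow> ('v list \<Rightarrow> 'k) \<Rightarrow> 'v list \<Rightarrow> 'k" where
  "tsmul c u = (\<lambda>w. c * u w)"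

definition lin_ext :: "('v list \<Rightarrow> 'v list \<Rightarrow> 'k::comm_ring_1) \<Rightarrow> ('v list \<Rightarrow> 'k) \<Rightarrow> 'v list \<Rightarrow> 'k" where
  "lin_ext L u = (\<Sum>w\<in>tsupp u. tsmul (u w) (L w))"

definition tmul_left :: "'v \<Rightarrow> ('v list \<Rightarrow> 'k::zero) \<Rightarrow> 'v list \<Rightarrow> 'k" where
  "tmul_left x u = (\<lambda>w. case w of [] \<Rightarrow> 0 | y # w' \<Rightarrow> if y = x then u w' else 0)"

inductive_set tensor_rel :: "('k::field \<Rightarrow> 'v::ab_group_add \<Rightarrow> 'v) \<Rightarrow> ('v list \<Rightarrow> 'k) set"
  for scale :: "'k::field \<Rightarrow> 'v::ab_group_add \<Rightarrow> 'v" where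
  zero: "0 \<in> tensor_rel scale"
| add: "u \<in> tensor_rel scale \<Longrightarrow> v \<in> tensor_rel scale \<Longrightarrow> u + v \<in> tensor_rel scale"
| smul: "u \<in> tensor_rel scale \<Longrightarrow> tsmul c u \<in> tensor_rel scale"
| additive: "tsingle (w1 @ (x + y) # w2) - tsingle (w1 @ x # w2) - tsingle (w1 @ y # w2)
              \<in> tensor_rel scale"
| homog: "tsingle (w1 @ scale c x # w2) - tsmul c (tsingle (w1 @ x # w2)) \<in> tensor_rel scale"

definition bilinear_form :: "('k::field \<Rightarrow> 'v::ab_group_add \<Rightarrow> 'v) \<Rightarrow> ('v \<Rightarrow> 'v \<Rightarrow> 'k) \<Rightarrow> bool" where
  "bilinear_form scale F \<longleftrightarrow>
     (\<forall>x y z. F (x + y) z = F x z + F y z) \<and>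
     (\<forall>x y z. F x (y + z) = F x y + F x z) \<and>
     (\<forall>c x y. F (scale c x) y = c * F x y) \<and>
     (\<forall>c x y. F x (scale c y) = c * F x y)"

primrec contr_word :: "('v \<Rightarrow> 'k::comm_ring_1) \<Rightarrow> 'v list \<Rightarrow> 'v list \<Rightarrow> 'k" where
  "contr_word f [] = 0"
| "contr_word f (x # w) = tsmul (f x) (tsingle w) - tmul_left x (contr_word f w)"

definition contr :: "('v \<Rightarrow> 'k::comm_ring_1) \<Rightarrow> ('v list \<Rightarrow> 'k) \<Rightarrow> 'v list \<Rightarrow> 'k" where
  "contr f = lin_ext (contr_word f)"

definition Lambda_gen :: "('v \<Rightarrow> 'v \<Rightarrow> 'k::comm_ring_1) \<Rightarrow> 'v \<Rightarrow> ('v list \<Rightarrow> 'k) \<Rightarrow> 'v list \<Rightarrow> 'k" where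
  "Lambda_gen F x u = tmul_left x u + contr (F x) u"

definition Lambda_word :: "('v \<Rightarrow> 'v \<Rightarrow> 'k::comm_ring_1) \<Rightarrow> 'v list \<Rightarrow> ('v list \<Rightarrow> 'k) \<Rightarrow> 'v list \<Rightarrow> 'k" where
  "Lambda_word F w = foldr (\<lambda>x g. Lambda_gen F x \<circ> g) w id"

definition lambdaF :: "('v \<Rightarrow> 'v \<Rightarrow> 'k::comm_ring_1) \<Rightarrow> ('v list \<Rightarrow> 'k) \<Rightarrow> 'v list \<Rightarrow> 'k" where
  "lambdaF F = lin_ext (\<lambda>w. Lambda_word F w (tsingle []))"

definition del2 :: "nat \<Rightarrow> nat \<Rightarrow> 'v list \<Rightarrow> 'v list" where
  "del2 i j w = [w ! k. k \<leftarrow> [0..<length w], k \<noteq> i, k \<noteq> j]"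

text \<open>a_1^F on words; with 0-based indices the sign (-1)^(i+j-1) becomes (-1)^(i+j+1).\<close>
definition aF_word :: "('v \<Rightarrow> 'v \<Rightarrow> 'k::comm_ring_1) \<Rightarrow> 'v list \<Rightarrow> 'v list \<Rightarrow> 'k" where
  "aF_word F w = (\<Sum>(i, j)\<in>{(i, j). i < j \<and> j < length w}.
       tsmul ((-1) ^ (i + j + 1) * F (w ! i) (w ! j)) (tsingle (del2 i j w)))"

definition aF :: "('v \<Rightarrow> 'v \<Rightarrow> 'k::comm_ring_1) \<Rightarrow> ('v list \<Rightarrow> 'k) \<Rightarrow> 'v list \<Rightarrow> 'k" where
  "aF F = lin_ext (aF_word F)"

end

theory Submission
  imports Defs
begin


lemma sum_fun_apply: "(\<Sum>i\<in>I. f i) x = (\<Sum>i\<in>I. f i x)"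
  by (induction I rule: infinite_finite_induct) auto

declare plus_fun_apply[simp del] zero_fun_apply[simp del] minus_apply[simp del] uminus_apply[simp del]

lemma tsmul_apply: "tsmul c u w = c * u w" by (simp add: tsmul_def)
lemmas pw = plus_fun_apply zero_fun_apply minus_apply uminus_apply sum_fun_apply tsmul_apply

abbreviation fin :: "('v list \<Rightarrow> 'k::zero) \<Rightarrow> bool" where
  "fin u \<equiv> finite (tsupp u)"

lemma tsingle_apply: "tsingle w w' = (if w' = w then 1 else 0)" by (simp add: tsingle_def)

lemma fin_zero[simp]: "fin (0::'v list \<Rightarrow> 'k::zero)" by (simp add: pw tsupp_def)
lemma fin_add[simp]: "fin u \<Longrightarrow> fin v \<Longrightarrow> fin (u + (v::'v list \<Rightarrow> 'k::comm_monoid_add))"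
  by (rule finite_subset[of _ "tsupp u \<union> tsupp v"]) (auto simp: pw tsupp_def)
lemma fin_neg[simp]: "fin (- (u::'v list \<Rightarrow> 'k::ab_group_add)) = fin u"
  by (simp add: pw tsupp_def)
lemma fin_diff[simp]: "fin u \<Longrightarrow> fin v \<Longrightarrow> fin (u - (v::'v list \<Rightarrow> 'k::ab_group_add))"
  by (rule finite_subset[of _ "tsupp u \<union> tsupp v"]) (auto simp: pw tsupp_def)
lemma fin_tsmul[simp]: "fin u \<Longrightarrow> fin (tsmul c (u::'v list \<Rightarrow> 'k::comm_ring_1))"
  by (rule finite_subset[of _ "tsupp u"]) (auto simp: pw tsupp_def)
lemma fin_tsingle[simp]: "fin (tsingle w :: 'v list \<Rightarrow> 'k::zero_neq_one)"
  by (rule finite_subset[of _ "{w}"]) (auto simp: tsupp_def tsingle_def)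
lemma fin_sum: "(\<And>i. i \<in> I \<Longrightarrow> fin (g i)) \<Longrightarrow> fin (\<Sum>i\<in>I. g i :: 'v list \<Rightarrow> 'k::ab_group_add)"
  by (induction I rule: infinite_finite_induct) auto
lemma fin_tmul_left[simp]: "fin u \<Longrightarrow> fin (tmul_left x (u::'v list \<Rightarrow> 'k::zero))"
proof (rule finite_subset[of _ "(\<lambda>w. x # w) ` tsupp u"])
  show "tsupp (tmul_left x u) \<subseteq> (#) x ` tsupp u"
  proof
    fix w assume "w \<in> tsupp (tmul_left x u)"
    then show "w \<in> (#) x ` tsupp u"
      by (cases w) (auto simp: tsupp_def tmul_left_def split: if_splits)
  qed
qed auto

lemma tmul_left_add[simp]: "tmul_left x (u + v) = tmul_left x u + tmul_left x (v::'v list \<Rightarrow> 'k::comm_monoid_add)"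
  by (rule ext) (auto simp: pw tmul_left_def split: list.splits)
lemma tmul_left_diff[simp]: "tmul_left x (u - v) = tmul_left x u - tmul_left x (v::'v list \<Rightarrow> 'k::ab_group_add)"
  by (rule ext) (auto simp: pw tmul_left_def split: list.splits)
lemma tmul_left_neg[simp]: "tmul_left x (- v) = - tmul_left x (v::'v list \<Rightarrow> 'k::ab_group_add)"
  by (rule ext) (auto simp: pw tmul_left_def split: list.splits)
lemma tmul_left_zero[simp]: "tmul_left x 0 = (0::'v list \<Rightarrow> 'k::comm_monoid_add)"
  by (rule ext) (auto simp: pw tmul_left_def split: list.splits)
lemma tmul_left_tsmul[simp]: "tmul_left x (tsmul c u) = tsmul c (tmul_left x (u::'v list \<Rightarrow> 'k::comm_ring_1))"
  by (rule ext) (auto simp: pw tmul_left_def tsmul_def split: list.splits)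
lemma tmul_left_sum: "tmul_left x (\<Sum>i\<in>I. g i) = (\<Sum>i\<in>I. tmul_left x (g i :: 'v list \<Rightarrow> 'k::ab_group_add))"
  by (induction I rule: infinite_finite_induct) auto
lemma tmul_left_single[simp]: "tmul_left x (tsingle w) = (tsingle (x # w) :: 'v list \<Rightarrow> 'k::zero_neq_one)"
  by (rule ext) (auto simp: pw tmul_left_def tsingle_def split: list.splits)

lemma tsmul_add[simp]: "tsmul c (u + v) = tsmul c u + tsmul c (v::'v list \<Rightarrow> 'k::comm_ring_1)"
  by (rule ext) (auto simp: pw tsmul_def algebra_simps)
lemma tsmul_diff[simp]: "tsmul c (u - v) = tsmul c u - tsmul c (v::'v list \<Rightarrow> 'k::comm_ring_1)"
  by (rule ext) (auto simp: pw tsmul_def algebra_simps)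
lemma tsmul_neg[simp]: "tsmul c (- v) = - tsmul c (v::'v list \<Rightarrow> 'k::comm_ring_1)"
  by (rule ext) (auto simp: pw tsmul_def algebra_simps)
lemma tsmul_zero[simp]: "tsmul c 0 = (0::'v list \<Rightarrow> 'k::comm_ring_1)" by (rule ext) (auto simp: pw tsmul_def)
lemma tsmul_zero_left[simp]: "tsmul 0 u = (0::'v list \<Rightarrow> 'k::comm_ring_1)" by (rule ext) (auto simp: pw tsmul_def)
lemma tsmul_one[simp]: "tsmul 1 u = (u::'v list \<Rightarrow> 'k::comm_ring_1)" by (rule ext) (auto simp: pw tsmul_def)
lemma tsmul_tsmul[simp]: "tsmul c (tsmul d u) = tsmul (c * d) (u::'v list \<Rightarrow> 'k::comm_ring_1)" by (rule ext) (auto simp: pw tsmul_def)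
lemma tsmul_add_left: "tsmul (c + d) u = tsmul c u + tsmul d (u::'v list \<Rightarrow> 'k::comm_ring_1)"
  by (rule ext) (auto simp: pw tsmul_def algebra_simps)
lemma tsmul_sum: "tsmul c (\<Sum>i\<in>I. g i) = (\<Sum>i\<in>I. tsmul c (g i :: 'v list \<Rightarrow> 'k::comm_ring_1))"
  by (induction I rule: infinite_finite_induct) auto

lemma lin_ext_superset:
  assumes "finite S" "tsupp u \<subseteq> S"
  shows "lin_ext L u = (\<Sum>w\<in>S. tsmul (u w) (L w))"
  unfolding lin_ext_def
  by (rule sum.mono_neutral_left) (use assms in \<open>auto simp: tsupp_def\<close>)

definition good :: "(('v list \<Rightarrow> 'k::comm_ring_1) \<Rightarrow> 'v list \<Rightarrow> 'k) \<Rightarrow> bool" where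
  "good T \<longleftrightarrow> (\<forall>u. fin u \<longrightarrow> fin (T u)) \<and>
     (\<forall>u v. fin u \<longrightarrow> fin v \<longrightarrow> T (u + v) = T u + T v) \<and>
     (\<forall>c u. fin u \<longrightarrow> T (tsmul c u) = tsmul c (T u))"

lemma good_lin_ext:
  assumes "\<And>w. fin (L w)"
  shows "good (lin_ext L)"
  unfolding good_def
proof (intro conjI allI impI)
  fix u :: "'a list \<Rightarrow> 'b" assume "fin u"
  then show "fin (lin_ext L u)" unfolding lin_ext_def by (intro fin_sum) (simp add: assms)
next
  fix u v :: "'a list \<Rightarrow> 'b" assume u: "fin u" and v: "fin v"
  let ?S = "tsupp u \<union> tsupp v"
  have "lin_ext L (u + v) = (\<Sum>w\<in>?S. tsmul ((u+v) w) (L w))"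
    by (rule lin_ext_superset) (use u v in \<open>auto simp: pw tsupp_def\<close>)
  also have "\<dots> = (\<Sum>w\<in>?S. tsmul (u w) (L w)) + (\<Sum>w\<in>?S. tsmul (v w) (L w))"
    by (simp add: pw tsmul_add_left sum.distrib)
  also have "\<dots> = lin_ext L u + lin_ext L v"
    using u v lin_ext_superset[of "tsupp u \<union> tsupp v" u L] lin_ext_superset[of "tsupp u \<union> tsupp v" v L] by simp
  finally show "lin_ext L (u + v) = lin_ext L u + lin_ext L v" .
next
  fix c and u :: "'a list \<Rightarrow> 'b" assume u: "fin u"
  have "lin_ext L (tsmul c u) = (\<Sum>w\<in>tsupp u. tsmul (tsmul c u w) (L w))"
    by (rule lin_ext_superset) (use u in \<open>auto simp: pw tsupp_def\<close>)
  also have "\<dots> = tsmul c (lin_ext L u)"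
    by (simp add: lin_ext_def tsmul_sum tsmul_apply)
  finally show "lin_ext L (tsmul c u) = tsmul c (lin_ext L u)" .
qed

lemma lin_ext_single[simp]: "lin_ext L (tsingle w :: 'v list \<Rightarrow> 'k::comm_ring_1) = L w"
proof -
  have "lin_ext L (tsingle w) = (\<Sum>w'\<in>{w}. tsmul (tsingle w w') (L w'))"
    by (rule lin_ext_superset) (auto simp: tsupp_def tsingle_def)
  then show ?thesis by (simp add: tsingle_def)
qed

lemma goodD1: "good T \<Longrightarrow> fin u \<Longrightarrow> fin (T u)" by (simp add: good_def)
lemma goodD2: "good T \<Longrightarrow> fin u \<Longrightarrow> fin v \<Longrightarrow> T (u + v) = T u + T v" by (simp add: good_def)
lemma goodD3: "good T \<Longrightarrow> fin u \<Longrightarrow> T (tsmul c u) = tsmul c (T u)" by (simp add: good_def)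
lemma good_zero: "good T \<Longrightarrow> T 0 = 0"
  using goodD3[of T 0 0] by simp
lemma good_neg: "good T \<Longrightarrow> fin u \<Longrightarrow> T (- u) = - T u"
  using goodD3[of T u "-1"] by (simp add: tsmul_def fun_Compl_def)
lemma good_diff: "good T \<Longrightarrow> fin u \<Longrightarrow> fin v \<Longrightarrow> T (u - v) = T u - T v"
  using goodD2[of T u "-v"] good_neg[of T v] by simp
lemma good_sum: "good T \<Longrightarrow> (\<And>i. i \<in> I \<Longrightarrow> fin (g i)) \<Longrightarrow> T (\<Sum>i\<in>I. g i) = (\<Sum>i\<in>I. T (g i))"
proof (induction I rule: infinite_finite_induct)
  case (insert x F) then show ?case by (simp add: goodD2 fin_sum)
qed (auto simp: good_zero)

lemma decomp: "fin u \<Longrightarrow> (u::'v list \<Rightarrow> 'k::comm_ring_1) = (\<Sum>w\<in>tsupp u. tsmul (u w) (tsingle w))"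
proof (rule ext)
  fix x assume "fin u"
  have "(\<Sum>w\<in>tsupp u. tsmul (u w) (tsingle w)) x = (\<Sum>w\<in>tsupp u. if x = w then u w else 0)"
    unfolding pw by (rule sum.cong) (auto simp: tsingle_def)
  also have "\<dots> = u x" using \<open>fin u\<close> by (simp add: tsupp_def)
  finally show "u x = (\<Sum>w\<in>tsupp u. tsmul (u w) (tsingle w)) x" by simp
qed

lemma good_decomp: "good T \<Longrightarrow> fin u \<Longrightarrow> T u = (\<Sum>w\<in>tsupp u. tsmul (u w) (T (tsingle w)))"
  apply (subst decomp, assumption)
  apply (subst good_sum, assumption, simp)
  apply (simp add: goodD3)
  done

lemma good_ext: "good T1 \<Longrightarrow> good T2 \<Longrightarrow> (\<And>w. T1 (tsingle w) = T2 (tsingle w)) \<Longrightarrow> fin u \<Longrightarrow> T1 u = T2 u"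
proof -
  assume a: "good T1" "good T2" "\<And>w. T1 (tsingle w) = T2 (tsingle w)" "fin u"
  have "T1 u = (\<Sum>w\<in>tsupp u. tsmul (u w) (T1 (tsingle w)))" using a by (simp only: good_decomp)
  also have "\<dots> = (\<Sum>w\<in>tsupp u. tsmul (u w) (T2 (tsingle w)))" using a by simp
  also have "\<dots> = T2 u" using a by (simp only: good_decomp)
  finally show ?thesis .
qed

lemma good_comp: "good S \<Longrightarrow> good T \<Longrightarrow> good (S \<circ> T)"
  unfolding good_def by auto
lemma good_id: "good id" unfolding good_def by auto
lemma good_pow: "good T \<Longrightarrow> good (T ^^ n)"
  by (induction n) (auto simp: good_id good_comp)
lemma good_plus: "good S \<Longrightarrow> good T \<Longrightarrow> good (\<lambda>u. S u + T u)"
  unfolding good_def by (auto simp: algebra_simps)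
lemma good_minus: "good S \<Longrightarrow> good T \<Longrightarrow> good (\<lambda>u. S u - T u)"
  unfolding good_def by (auto simp: algebra_simps)
lemma good_tsmul: "good T \<Longrightarrow> good (\<lambda>u. tsmul c (T u))"
  unfolding good_def by (auto simp: mult.commute)
lemma good_sumf: "(\<And>i. i \<in> I \<Longrightarrow> good (T i)) \<Longrightarrow> good (\<lambda>u. \<Sum>i\<in>I. T i u)"
proof (induction I rule: infinite_finite_induct)
  case (infinite A) then show ?case by (simp add: good_def)
next
  case empty then show ?case by (simp add: good_def)
next
  case (insert x F)
  then show ?case by (simp add: good_plus)
qed
lemma good_tmul_left: "good (tmul_left x)"
  unfolding good_def by auto




definition del1 :: "nat \<Rightarrow> 'v list \<Rightarrow> 'v list" where
  "del1 k w = map (nth w) (filter (\<lambda>m. m \<noteq> k) [0..<length w])"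

lemma comp_aux: "[w ! k. k \<leftarrow> xs, k \<noteq> i, k \<noteq> j] = map (nth w) (filter (\<lambda>k. k \<noteq> i \<and> k \<noteq> j) xs)"
  by (induction xs) auto

lemma del2_alt: "del2 i j w = map (nth w) (filter (\<lambda>k. k \<noteq> i \<and> k \<noteq> j) [0..<length w])"
  unfolding del2_def by (rule comp_aux)

lemma upt_Suc_Cons: "[0..<Suc n] = 0 # map Suc [0..<n]"
  by (simp add: upt_conv_Cons map_Suc_upt del: upt_Suc)

lemma del1_0[simp]: "del1 0 (x # w) = w"
  unfolding del1_def by (simp add: upt_Suc_Cons filter_map o_def del: upt_Suc) (simp add: map_nth)

lemma del1_Suc[simp]: "del1 (Suc k) (x # w) = x # del1 k w"
  unfolding del1_def by (simp add: upt_Suc_Cons filter_map o_def del: upt_Suc)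

lemma del2_0_Suc[simp]: "del2 0 (Suc j) (x # w) = del1 j w"
  unfolding del2_alt del1_def by (simp add: upt_Suc_Cons filter_map o_def del: upt_Suc)

lemma del2_Suc_Suc[simp]: "del2 (Suc i) (Suc j) (x # w) = x # del2 i j w"
  unfolding del2_alt by (simp add: upt_Suc_Cons filter_map o_def del: upt_Suc)

lemma length_del2: "i < length w \<Longrightarrow> length (del2 i j w) < length w"
proof -
  assume "i < length w"
  then have "length (filter (\<lambda>k. k \<noteq> i \<and> k \<noteq> j) [0..<length w]) < length [0..<length w]"
    by (intro length_filter_less[of i]) auto
  then show ?thesis unfolding del2_alt by simp
qed

lemma tsmul_neg_left: "tsmul (- c) u = - tsmul c (u::'v list \<Rightarrow> 'k::comm_ring_1)"
  by (rule ext) (simp add: pw)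

lemma contr_word_explicit:
  "contr_word f w = (\<Sum>k<length w. tsmul ((-1)^k * f (w!k)) (tsingle (del1 k w)))"
proof (induction w)
  case Nil then show ?case by simp
next
  case (Cons x w)
  have "contr_word f (x # w) = tsmul (f x) (tsingle w)
      - (\<Sum>k<length w. tsmul ((-1)^k * f (w!k)) (tsingle (x # del1 k w)))"
    by (simp add: Cons tmul_left_sum)
  also have "\<dots> = tsmul (f x) (tsingle w)
      + (\<Sum>k<length w. tsmul ((-1)^(Suc k) * f ((x#w)!(Suc k))) (tsingle (del1 (Suc k) (x # w))))"
    by (simp add: tsmul_neg_left sum_negf)
  also have "\<dots> = (\<Sum>k<length (x#w). tsmul ((-1)^k * f ((x#w)!k)) (tsingle (del1 k (x#w))))"
    by (simp only: length_Cons sum.lessThan_Suc_shift) simp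
  finally show ?case .
qed

lemma pairs_Suc: "{(i, j). i < j \<and> j < Suc n} =
   (\<lambda>j. (0::nat, Suc j)) ` {..<n} \<union> (\<lambda>(i, j). (Suc i, Suc j)) ` {(i, j). i < j \<and> j < n}"
  (is "?L = ?A \<union> ?B")
proof
  show "?L \<subseteq> ?A \<union> ?B"
  proof
    fix p assume "p \<in> ?L"
    then obtain i j where p: "p = (i, j)" "i < j" "j < Suc n" by auto
    then obtain j' where j: "j = Suc j'" by (cases j) auto
    show "p \<in> ?A \<union> ?B"
    proof (cases i)
      case 0 then show ?thesis using p j by auto
    next
      case (Suc i') then show ?thesis using p j by (auto intro!: image_eqI[of _ _ "(i', j')"])
    qed
  qed
qed auto

lemma aF_word_Cons:
  "aF_word F (x # w) = tmul_left x (aF_word F w) + contr_word (F x) w"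
proof -
  let ?g = "\<lambda>w. \<lambda>(i, j). tsmul ((-1) ^ (i + j + 1) * F (w ! i) (w ! j)) (tsingle (del2 i j w))"
  have fin: "finite {(i, j). i < j \<and> j < (n::nat)}" for n
    by (rule finite_subset[of _ "{..<n} \<times> {..<n}"]) auto
  have "aF_word F (x # w) = sum (?g (x#w)) ((\<lambda>j. (0::nat, Suc j)) ` {..<length w})
     + sum (?g (x#w)) ((\<lambda>(i, j). (Suc i, Suc j)) ` {(i, j). i < j \<and> j < length w})"
    unfolding aF_word_def length_Cons pairs_Suc
    by (rule sum.union_disjoint) (auto simp: fin)
  also have "sum (?g (x#w)) ((\<lambda>j. (0::nat, Suc j)) ` {..<length w}) = contr_word (F x) w"
    by (subst sum.reindex) (auto simp: inj_on_def contr_word_explicit)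
  also have "sum (?g (x#w)) ((\<lambda>(i, j). (Suc i, Suc j)) ` {(i, j). i < j \<and> j < length w})
      = tmul_left x (aF_word F w)"
    by (subst sum.reindex) (auto simp: inj_on_def aF_word_def tmul_left_sum intro!: sum.cong)
  finally show ?thesis by (simp add: add.commute)
qed




lemma fin_contr_word[simp]: "fin (contr_word f w)"
  by (induction w) auto

lemma fin_aF_word[simp]: "fin (aF_word F w)"
  unfolding aF_word_def by (intro fin_sum) (auto split: prod.splits)

lemma good_contr: "good (contr f)"
  unfolding contr_def by (rule good_lin_ext) simp

lemma good_aF: "good (aF F)"
  unfolding aF_def by (rule good_lin_ext) simp

lemma contr_single[simp]: "contr f (tsingle w) = contr_word f w"
  by (simp add: contr_def)

lemma aF_single[simp]: "aF F (tsingle w) = aF_word F w"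
  by (simp add: aF_def)

lemma fin_contr[simp]: "fin u \<Longrightarrow> fin (contr f u)"
  using good_contr goodD1 by blast
lemma fin_aF[simp]: "fin u \<Longrightarrow> fin (aF F u)"
  using good_aF goodD1 by blast

lemma good_tsmul_id: "good (\<lambda>u. tsmul c u)"
  unfolding good_def by (auto simp: mult.commute)

lemma contr_tmul_left:
  assumes "fin u"
  shows "contr f (tmul_left x u) = tsmul (f x) u - tmul_left x (contr f u)"
proof -
  have "(contr f \<circ> tmul_left x) u = (\<lambda>u. tsmul (f x) u - tmul_left x (contr f u)) u"
  proof (rule good_ext[OF _ _ _ assms])
    show "good (contr f \<circ> tmul_left x)" by (intro good_comp good_contr good_tmul_left)
    show "good (\<lambda>u. tsmul (f x) u - tmul_left x (contr f u))"
      by (intro good_minus good_tsmul_id) (rule good_comp[OF good_tmul_left good_contr, unfolded o_def])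
  qed simp
  then show ?thesis by simp
qed

lemma aF_tmul_left:
  assumes "fin u"
  shows "aF F (tmul_left x u) = tmul_left x (aF F u) + contr (F x) u"
proof -
  have "(aF F \<circ> tmul_left x) u = (\<lambda>u. tmul_left x (aF F u) + contr (F x) u) u"
  proof (rule good_ext[OF _ _ _ assms])
    show "good (aF F \<circ> tmul_left x)" by (intro good_comp good_aF good_tmul_left)
    show "good (\<lambda>u. tmul_left x (aF F u) + contr (F x) u)"
      by (intro good_plus good_contr) (rule good_comp[OF good_tmul_left good_aF, unfolded o_def])
  qed (simp add: aF_word_Cons)
  then show ?thesis by simp
qed

lemma contr_anti_word: "contr f (contr g (tsingle w)) = - contr g (contr f (tsingle w))"
proof (induction w)
  case Nil then show ?case by (simp add: good_zero[OF good_contr])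
next
  case (Cons x w)
  have eq1: "contr f (contr g (tsingle (x # w))) =
     tsmul (g x) (contr_word f w) - (tsmul (f x) (contr_word g w) - tmul_left x (contr f (contr_word g w)))"
    by (simp add: good_diff[OF good_contr] goodD3[OF good_contr] contr_tmul_left)
  have eq2: "contr g (contr f (tsingle (x # w))) =
     tsmul (f x) (contr_word g w) - (tsmul (g x) (contr_word f w) - tmul_left x (contr g (contr_word f w)))"
    by (simp add: good_diff[OF good_contr] goodD3[OF good_contr] contr_tmul_left)
  have IH: "contr f (contr_word g w) = - contr g (contr_word f w)" using Cons by simp
  show ?case unfolding eq1 eq2 IH by (simp add: algebra_simps)
qed

lemma contr_anti: "fin u \<Longrightarrow> contr f (contr g u) = - contr g (contr f u)"
proof -
  assume u: "fin u"
  have "(contr f \<circ> contr g) u = (\<lambda>u. - contr g (contr f u)) u"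
  proof (rule good_ext[OF _ _ _ u])
    show "good (contr f \<circ> contr g)" by (intro good_comp good_contr)
    show "good (\<lambda>u. - contr g (contr f u))"
      using good_minus[OF _ good_comp[OF good_contr good_contr], of "\<lambda>_. 0" g f]
      by (simp add: good_def o_def)
  next
    fix w show "(contr f \<circ> contr g) (tsingle w) = (\<lambda>u. - contr g (contr f u)) (tsingle w)"
      unfolding o_def by (rule contr_anti_word)
  qed
  then show ?thesis by simp
qed

lemma contr_aF_word: "contr f (aF F (tsingle w)) = aF F (contr f (tsingle w))"
proof (induction w)
  case Nil then show ?case by (simp add: good_zero[OF good_contr] good_zero[OF good_aF] aF_word_def)
next
  case (Cons x w)
  have eq1: "contr f (aF F (tsingle (x # w))) =
     (tsmul (f x) (aF_word F w) - tmul_left x (contr f (aF_word F w))) + contr f (contr (F x) (tsingle w))"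
    by (simp add: aF_word_Cons goodD2[OF good_contr] contr_tmul_left)
  have eq2: "aF F (contr f (tsingle (x # w))) =
     tsmul (f x) (aF_word F w) - (tmul_left x (aF F (contr_word f w)) + contr (F x) (contr_word f w))"
    by (simp add: good_diff[OF good_aF] goodD3[OF good_aF] aF_tmul_left)
  have eq3: "contr f (contr (F x) (tsingle w)) = - contr (F x) (contr_word f w)"
    using contr_anti[of "tsingle w" f "F x"] by simp
  have IH: "contr f (aF_word F w) = aF F (contr_word f w)" using Cons by simp
  show ?case unfolding eq1 eq2 eq3 IH by (simp add: algebra_simps)
qed

lemma contr_aF: "fin u \<Longrightarrow> contr f (aF F u) = aF F (contr f u)"
proof -
  assume u: "fin u"
  have "(contr f \<circ> aF F) u = (aF F \<circ> contr f) u"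
    by (rule good_ext[OF good_comp[OF good_contr good_aF] good_comp[OF good_aF good_contr] _ u])
      (simp only: o_def contr_aF_word)
  then show ?thesis by simp
qed




lemma fin_pow[simp]: "fin u \<Longrightarrow> fin ((aF F ^^ n) u)"
  using goodD1[OF good_pow[OF good_aF]] by blast

lemma contr_pow: "fin u \<Longrightarrow> contr f ((aF F ^^ n) u) = (aF F ^^ n) (contr f u)"
proof (induction n)
  case (Suc n)
  have "contr f ((aF F ^^ Suc n) u) = aF F (contr f ((aF F ^^ n) u))"
    using contr_aF[of "(aF F ^^ n) u" f F] Suc.prems by simp
  also have "\<dots> = (aF F ^^ Suc n) (contr f u)" using Suc by simp
  finally show ?case .
qed simp

lemma pow_tmul:
  assumes v: "fin v"
  shows "(aF F ^^ n) (tmul_left x v) =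
     tmul_left x ((aF F ^^ n) v) + tsmul (of_nat n) (contr (F x) ((aF F ^^ (n - 1)) v))"
proof (induction n)
  case 0 then show ?case by simp
next
  case (Suc n)
  have "(aF F ^^ Suc n) (tmul_left x v) =
     aF F (tmul_left x ((aF F ^^ n) v)) + tsmul (of_nat n) (aF F (contr (F x) ((aF F ^^ (n - 1)) v)))"
    using v by (simp add: Suc goodD2[OF good_aF] goodD3[OF good_aF])
  also have "tsmul (of_nat n) (aF F (contr (F x) ((aF F ^^ (n - 1)) v)))
     = tsmul (of_nat n) (contr (F x) ((aF F ^^ n) v))"
  proof (cases n)
    case (Suc m) then show ?thesis using v by (simp add: contr_aF)
  qed simp
  finally show ?case using v by (simp add: aF_tmul_left tsmul_add_left algebra_simps)
qed

definition Eexp where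
  "Eexp F M u = (\<Sum>n<M. tsmul (1 / fact n) ((aF F ^^ n) u))"

lemma good_Eexp: "good (Eexp F M)"
  unfolding Eexp_def[abs_def]
  by (intro good_sumf good_tsmul good_pow good_aF)

lemma E_tmul:
  assumes v: "fin v"
  shows "Eexp F (Suc M) (tmul_left x v) =
     tmul_left x (Eexp F (Suc M) v) + contr (F x) (Eexp F M (v :: 'v list \<Rightarrow> 'k::field_char_0))"
proof -
  have "Eexp F (Suc M) (tmul_left x v) =
     (\<Sum>n<Suc M. tmul_left x (tsmul (1 / fact n) ((aF F ^^ n) v))) +
     (\<Sum>n<Suc M. tsmul (of_nat n / fact n) (contr (F x) ((aF F ^^ (n - 1)) v)))"
  proof -
    have "tsmul (1 / fact n) ((aF F ^^ n) (tmul_left x v)) =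
      tmul_left x (tsmul (1 / fact n) ((aF F ^^ n) v)) +
      tsmul (of_nat n / fact n) (contr (F x) ((aF F ^^ (n - 1)) v))" for n
      by (simp only: pow_tmul[OF v] tsmul_add tsmul_tsmul tmul_left_tsmul) simp
    then show ?thesis unfolding Eexp_def by (simp only: sum.distrib)
  qed
  also have "(\<Sum>n<Suc M. tsmul (of_nat n / fact n) (contr (F x) ((aF F ^^ (n - 1)) v)))
     = tsmul (of_nat 0 / fact 0) (contr (F x) ((aF F ^^ (0 - 1)) v)) +
       (\<Sum>n<M. tsmul (of_nat (Suc n) / fact (Suc n)) (contr (F x) ((aF F ^^ (Suc n - 1)) v)))"
    by (rule sum.lessThan_Suc_shift)
  also have "\<dots> = (\<Sum>n<M. tsmul (1 / fact n) (contr (F x) ((aF F ^^ n) v)))"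
  proof -
    have "(of_nat (Suc n) / fact (Suc n) :: 'k) = 1 / fact n" for n
      by (simp add: field_simps del: of_nat_Suc)
    then show ?thesis by simp
  qed
  also have "\<dots> = contr (F x) (Eexp F M v)"
    unfolding Eexp_def using v
    by (simp add: good_sum[OF good_contr] goodD3[OF good_contr])
  finally show ?thesis by (simp add: Eexp_def tmul_left_sum)
qed



definition Bd :: "nat \<Rightarrow> ('v list \<Rightarrow> 'k::zero) \<Rightarrow> bool" where
  "Bd k u \<longleftrightarrow> (\<forall>w. u w \<noteq> 0 \<longrightarrow> length w < k)"

lemma aF_word_supp: "aF_word F w w' \<noteq> 0 \<Longrightarrow> length w' < length w"
proof -
  assume "aF_word F w w' \<noteq> 0"
  then have "(\<Sum>p\<in>{(i, j). i < j \<and> j < length w}.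
       (case p of (i, j) \<Rightarrow> tsmul ((-1) ^ (i + j + 1) * F (w ! i) (w ! j)) (tsingle (del2 i j w))) w') \<noteq> 0"
    unfolding aF_word_def by (simp add: sum_fun_apply)
  then obtain p where p: "p \<in> {(i, j). i < j \<and> j < length w}"
      "(case p of (i, j) \<Rightarrow> tsmul ((-1) ^ (i + j + 1) * F (w ! i) (w ! j)) (tsingle (del2 i j w))) w' \<noteq> 0"
    by (rule sum.not_neutral_contains_not_neutral)
  then obtain i j where "i < j" "j < length w"
      "tsmul ((-1) ^ (i + j + 1) * F (w ! i) (w ! j)) (tsingle (del2 i j w)) w' \<noteq> 0"
    by (cases p) auto
  then have "w' = del2 i j w" "i < length w" by (auto simp: tsmul_apply tsingle_def split: if_splits)
  then show ?thesis using length_del2 by blast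
qed

lemma aF_Bd: "fin u \<Longrightarrow> Bd k u \<Longrightarrow> Bd (k - 1) (aF F u)"
proof (unfold Bd_def, intro allI impI)
  fix w' assume u: "fin u" and B: "\<forall>w. u w \<noteq> 0 \<longrightarrow> length w < k" and ne: "aF F u w' \<noteq> 0"
  have "aF F u w' = (\<Sum>w\<in>tsupp u. u w * aF_word F w w')"
    unfolding aF_def lin_ext_def by (simp add: sum_fun_apply tsmul_apply)
  with ne have "(\<Sum>w\<in>tsupp u. u w * aF_word F w w') \<noteq> 0" by simp
  then obtain w where "w \<in> tsupp u" "u w * aF_word F w w' \<noteq> 0"
    by (rule sum.not_neutral_contains_not_neutral)
  then have uw: "u w \<noteq> 0" and aw: "aF_word F w w' \<noteq> 0" by auto
  have "length w < k" using B uw by blast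
  moreover have "length w' < length w" by (rule aF_word_supp[OF aw])
  ultimately show "length w' < k - 1" by linarith
qed

lemma pow_Bd: "fin u \<Longrightarrow> Bd k u \<Longrightarrow> Bd (k - n) ((aF F ^^ n) u)"
proof (induction n)
  case (Suc n)
  have "Bd (k - n) ((aF F ^^ n) u)" using Suc.IH[OF Suc.prems] .
  then have "Bd (k - n - 1) (aF F ((aF F ^^ n) u))" by (rule aF_Bd[rotated]) (simp add: Suc.prems(1))
  moreover have eq: "k - Suc n = k - n - 1" by simp
  ultimately show ?case by (simp only: eq funpow.simps(2) o_apply)
qed simp

lemma pow_vanish: "fin u \<Longrightarrow> Bd k u \<Longrightarrow> k \<le> n \<Longrightarrow> (aF F ^^ n) u = 0"
proof -
  assume a: "fin u" "Bd k u" "k \<le> n"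
  then have "Bd 0 ((aF F ^^ n) u)" using pow_Bd[of u k n F] by simp
  then show ?thesis by (intro ext) (simp add: Bd_def zero_fun_apply)
qed

lemma Lambda_word_Cons: "Lambda_word F (x # w) v = Lambda_gen F x (Lambda_word F w v)"
  by (simp add: Lambda_word_def)

lemma main_word:
  "length w < M \<Longrightarrow> Lambda_word F w (tsingle []) = Eexp F M (tsingle w :: 'v list \<Rightarrow> 'k::field_char_0)"
proof (induction w arbitrary: M)
  case Nil
  then obtain M' where M: "M = Suc M'" by (cases M) auto
  have z: "(aF F ^^ Suc n) (tsingle []) = (0 :: 'v list \<Rightarrow> 'k)" for n
    by (simp only: funpow_Suc_right o_apply aF_single)
       (simp add: aF_word_def good_zero[OF good_pow[OF good_aF]])
  show ?case unfolding M Eexp_def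
    by (simp only: sum.lessThan_Suc_shift z) (simp add: Lambda_word_def)
next
  case (Cons x w)
  then obtain M' where M: "M = Suc M'" and l: "length w < M'" by (cases M) auto
  have "Lambda_word F (x # w) (tsingle []) =
     tmul_left x (Eexp F (Suc M') (tsingle w)) + contr (F x) (Eexp F M' (tsingle w))"
    using Cons.IH[of M'] Cons.IH[of "Suc M'"] l
    by (simp add: Lambda_word_Cons Lambda_gen_def)
  also have "\<dots> = Eexp F (Suc M') (tsingle (x # w))"
    using E_tmul[of "tsingle w" F M' x] by simp
  finally show ?case using M by simp
qed

lemma tensor_rel_sum: "(\<And>i. i \<in> I \<Longrightarrow> g i \<in> tensor_rel s) \<Longrightarrow> sum g I \<in> tensor_rel s"
  by (induction I rule: infinite_finite_induct) (auto intro: tensor_rel.zero tensor_rel.add)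

theorem mainTheorem7:
  fixes scale :: "'k::field_char_0 \<Rightarrow> 'v::ab_group_add \<Rightarrow> 'v"
    and F :: "'v \<Rightarrow> 'v \<Rightarrow> 'k"
    and u :: "'v list \<Rightarrow> 'k"
  assumes "vector_space scale"
    and "bilinear_form scale F"
    and "finite (tsupp u)"
  shows "(\<exists>N. \<forall>n\<ge>N. (aF F ^^ n) u \<in> tensor_rel scale) \<and>
         (\<forall>N. (\<forall>n\<ge>N. (aF F ^^ n) u \<in> tensor_rel scale) \<longrightarrow>
           lambdaF F u - (\<Sum>n<N. tsmul (1 / fact n) ((aF F ^^ n) u)) \<in> tensor_rel scale)"
proof -
  have u: "fin u" using assms(3) .
  define K where "K = Suc (Max (insert 0 (length ` tsupp u)))"
  have K: "length w < K" if "w \<in> tsupp u" for w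
    unfolding K_def using u that by (simp add: le_imp_less_Suc)
  have BK: "Bd K u" using K by (auto simp: Bd_def tsupp_def)
  have van: "(aF F ^^ n) u = 0" if "K \<le> n" for n using pow_vanish[OF u BK that] .
  have lam: "lambdaF F u = Eexp F M u" if "K \<le> M" for M
  proof -
    have "lambdaF F u = (\<Sum>w\<in>tsupp u. tsmul (u w) (Lambda_word F w (tsingle [])))"
      by (simp add: lambdaF_def lin_ext_def)
    also have "\<dots> = (\<Sum>w\<in>tsupp u. tsmul (u w) (Eexp F M (tsingle w)))"
    proof (rule sum.cong)
      fix w assume "w \<in> tsupp u"
      then have "length w < M" using K[of w] that by linarith
      then show "tsmul (u w) (Lambda_word F w (tsingle [])) = tsmul (u w) (Eexp F M (tsingle w))"
        by (simp add: main_word)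
    qed simp
    also have "\<dots> = Eexp F M u" by (rule good_decomp[OF good_Eexp u, symmetric])
    finally show ?thesis .
  qed
  show ?thesis
  proof (intro conjI exI allI impI)
    fix n assume "K \<le> n"
    then show "(aF F ^^ n) u \<in> tensor_rel scale" by (simp add: van tensor_rel.zero)
  next
    fix N assume H: "\<forall>n\<ge>N. (aF F ^^ n) u \<in> tensor_rel scale"
    define M where "M = max N K"
    have "Eexp F M u = (\<Sum>n<N. tsmul (1 / fact n) ((aF F ^^ n) u))
       + (\<Sum>n\<in>{N..<M}. tsmul (1 / fact n) ((aF F ^^ n) u))"
      unfolding Eexp_def M_def lessThan_atLeast0
      by (rule sum.atLeastLessThan_concat[symmetric]) auto
    then have "lambdaF F u - (\<Sum>n<N. tsmul (1 / fact n) ((aF F ^^ n) u))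
       = (\<Sum>n\<in>{N..<M}. tsmul (1 / fact n) ((aF F ^^ n) u))"
      using lam[of M] by (simp add: M_def)
    also have "\<dots> \<in> tensor_rel scale"
      using H by (intro tensor_rel_sum tensor_rel.smul) auto
    finally show "lambdaF F u - (\<Sum>n<N. tsmul (1 / fact n) ((aF F ^^ n) u)) \<in> tensor_rel scale" .
  qed
qed


end
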